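(* Let $\phi_*$ be an irreducible representation of $\mathfrak{su}(2)$ of odd dimension $2\ell+1$ with integer $\ell\ge1$, and set $J_a=\phi_*(\sigma^a/2)$ for $a\in\{x,y,z\}$. Then each of the kernel projectors $K(J_x),K(J_y),K(J_z)$ has rank $1$, and there exist unit vectors $|x\rangle\in\ker J_x$, $|y\rangle\in\ker J_y$, $|z\rangle\in\ker J_z$ such that \[ \langle x|y\rangle=\langle y|z\rangle=\langle z|x\rangle=\begin{cases}\dfrac{(-1)^{\ell/2}}{2^\ell}\dbinom{\ell}{\ell/2}&\text{if $\ell$ is even},\\[2mm] 0&\text{if $\ell$ is odd}.\end{cases} \]
   Context: $K(H)$ is the orthogonal projector onto the kernel of a Hermitian operator $H$. $\sigma^x,\sigma^y,\sigma^z$ are the Pauli matrices, so $[J_x,J_y]=\mathrm iJ_z$ and cyclically. *)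

theory Defs
  imports "HOL-Analysis.Analysis"
begin

definition braket :: "complex^'n \<Rightarrow> complex^'n \<Rightarrow> complex" where
  "braket x y = (\<Sum>i\<in>UNIV. cnj (x $ i) * y $ i)"

definition adjoint_mat :: "complex^'n^'m \<Rightarrow> complex^'m^'n" where
  "adjoint_mat A = (\<chi> i j. cnj (A $ j $ i))"

definition hermitian :: "complex^'n^'n \<Rightarrow> bool" where
  "hermitian A \<longleftrightarrow> adjoint_mat A = A"

definition commutator :: "complex^'n^'n \<Rightarrow> complex^'n^'n \<Rightarrow> complex^'n^'n" where
  "commutator A B = A ** B - B ** A"

definition kernel_projector :: "complex^'n^'n \<Rightarrow> complex^'n^'n" where
  "kernel_projector H = (THE P. hermitian P \<and> P ** P = P \<and>
      range (\<lambda>v. P *v v) = {v. H *v v = 0})"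

definition csubspace_vec :: "(complex^'n) set \<Rightarrow> bool" where
  "csubspace_vec W \<longleftrightarrow> 0 \<in> W \<and> (\<forall>u\<in>W. \<forall>v\<in>W. u + v \<in> W) \<and> (\<forall>c u. u \<in> W \<longrightarrow> c *s u \<in> W)"

text \<open>A triple (J_x,J_y,J_z) = (phi(sigma^x/2), phi(sigma^y/2), phi(sigma^z/2)) of a
  (unitary) representation phi of su(2): Hermitian generators with [J_x,J_y] = i J_z cyclically.\<close>
definition su2_rep :: "complex^'n^'n \<Rightarrow> complex^'n^'n \<Rightarrow> complex^'n^'n \<Rightarrow> bool" where
  "su2_rep Jx Jy Jz \<longleftrightarrow> hermitian Jx \<and> hermitian Jy \<and> hermitian Jz \<and>
     commutator Jx Jy = mat \<i> ** Jz \<and> commutator Jy Jz = mat \<i> ** Jx \<and>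
     commutator Jz Jx = mat \<i> ** Jy"

definition su2_irreducible :: "complex^'n^'n \<Rightarrow> complex^'n^'n \<Rightarrow> complex^'n^'n \<Rightarrow> bool" where
  "su2_irreducible Jx Jy Jz \<longleftrightarrow>
     (\<forall>W. csubspace_vec W \<and> (\<forall>v\<in>W. Jx *v v \<in> W \<and> Jy *v v \<in> W \<and> Jz *v v \<in> W)
          \<longrightarrow> W = {0} \<or> W = UNIV)"

end

theory Submission
  imports Defs "Jordan_Normal_Form.Spectral_Radius" "HOL-Computational_Algebra.Formal_Power_Series"
begin


lemma eigvec_exists:
  fixes C :: "complex^'n^'n"
  shows "\<exists>k v. v \<noteq> 0 \<and> C *v v = k *s v"
proof -
  let ?n = "CARD('n)"
  obtain g :: "nat \<Rightarrow> 'n" where g: "bij_betw g {0..<?n} UNIV"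
    using ex_bij_betw_nat_finite[of "UNIV :: 'n set"] by auto
  define gi where "gi = inv_into {0..<?n} g"
  have ggi: "g (gi i) = i" for i
    unfolding gi_def using g by (simp add: bij_betw_inv_into_right)
  have gi_lt: "gi i < ?n" for i
    unfolding gi_def using g by (metis atLeastLessThan_iff bij_betw_def inv_into_into iso_tuple_UNIV_I)
  have gig: "t < ?n \<Longrightarrow> gi (g t) = t" for t
    unfolding gi_def using g by (simp add: bij_betw_inv_into_left)
  define M where "M = Matrix.mat ?n ?n (\<lambda>(i,j). C $ g i $ g j)"
  have Mc: "M \<in> carrier_mat ?n ?n" unfolding M_def by simp
  have "spectrum M \<noteq> {}" by (rule spectrum_non_empty[OF Mc]) simp
  then obtain k where "eigenvalue M k" unfolding spectrum_def by auto
  then obtain w where w: "eigenvector M w k" unfolding eigenvalue_def by auto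
  then have wc: "w \<in> carrier_vec ?n" and wnz: "w \<noteq> zero_vec ?n" and Mw: "mult_mat_vec M w = smult_vec k w"
    unfolding eigenvector_def using Mc by auto
  define v :: "complex^'n" where "v = (\<chi> i. vec_index w (gi i))"
  have "C *v v = k *s v"
  proof (rule Finite_Cartesian_Product.vec_eq_iff[THEN iffD2], rule allI)
    fix i :: 'n
    have "(C *v v) $ i = (\<Sum>j\<in>UNIV. C $ i $ j * vec_index w (gi j))"
      by (simp add: matrix_vector_mult_def v_def)
    also have "\<dots> = (\<Sum>t\<in>{0..<?n}. C $ i $ g t * vec_index w t)"
      using sum.reindex_bij_betw[OF g, of "\<lambda>j. C $ i $ j * vec_index w (gi j)"] gig by simp
    also have "\<dots> = vec_index (mult_mat_vec M w) (gi i)"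
      using wc gi_lt[of i] by (simp add: M_def scalar_prod_def ggi)
    also have "\<dots> = k * vec_index w (gi i)" using Mw wc gi_lt[of i] by simp
    finally show "(C *v v) $ i = (k *s v) $ i" by (simp add: v_def)
  qed
  moreover have "v \<noteq> 0"
  proof
    assume v0: "v = 0"
    have "w = zero_vec ?n"
    proof (rule eq_vecI)
      fix t assume "t < dim_vec (zero_vec ?n :: complex Matrix.vec)"
      then have t: "t < ?n" by simp
      have "vec_index w t = v $ g t" by (simp add: v_def gig[OF t])
      then show "vec_index w t = vec_index (zero_vec ?n) t" using v0 t by simp
    qed (use wc in simp)
    with wnz show False by simp
  qed
  ultimately show ?thesis by blast
qed




lemma mv_scale: "(A::'a::comm_ring_1^'n^'m) *v (c *s x) = c *s (A *v x)"
  by (simp add: Finite_Cartesian_Product.vec_eq_iff matrix_vector_mult_def sum_distrib_left mult_ac)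

lemma mv_add: "(A::'a::comm_ring_1^'n^'m) *v (x + y) = A *v x + A *v y"
  by (simp add: Finite_Cartesian_Product.vec_eq_iff matrix_vector_mult_def sum.distrib algebra_simps)

lemma mv_diff: "(A::'a::comm_ring_1^'n^'m) *v (x - y) = A *v x - A *v y"
  by (simp add: Finite_Cartesian_Product.vec_eq_iff matrix_vector_mult_def sum_subtractf algebra_simps)

lemma mv_zero: "(A::'a::comm_ring_1^'n^'m) *v 0 = 0"
  by (simp add: Finite_Cartesian_Product.vec_eq_iff matrix_vector_mult_def)

lemma mat_mv: "Finite_Cartesian_Product.mat c *v (x::'a::comm_ring_1^'n) = c *s x"
proof -
  have "(\<Sum>j\<in>UNIV. (if i = j then c else 0) * x $ j) = c * x $ i" for i
  proof -
    have "(\<Sum>j\<in>UNIV. (if i = j then c else 0) * x $ j) = (\<Sum>j\<in>UNIV. (if i = j then c * x $ i else 0))"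
      by (rule sum.cong) auto
    then show ?thesis by simp
  qed
  then show ?thesis
    by (simp add: Finite_Cartesian_Product.vec_eq_iff matrix_vector_mult_def Finite_Cartesian_Product.mat_def)
qed

lemma braket_add_right: "braket x (y + z) = braket x y + braket x z"
  by (simp add: braket_def distrib_left sum.distrib)
lemma braket_add_left: "braket (x + y) z = braket x z + braket y z"
  by (simp add: braket_def distrib_right sum.distrib)
lemma braket_diff_right: "braket x (y - z) = braket x y - braket x z"
  by (simp add: braket_def right_diff_distrib sum_subtractf)
lemma braket_diff_left: "braket (x - y) z = braket x z - braket y z"
  by (simp add: braket_def left_diff_distrib sum_subtractf)
lemma braket_scale_right: "braket x (c *s y) = c * braket x y"
  by (simp add: braket_def sum_distrib_left mult_ac)
lemma braket_scale_left: "braket (c *s x) y = cnj c * braket x y"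
  by (simp add: braket_def sum_distrib_left mult_ac)
lemma braket_zero_right[simp]: "braket x 0 = 0"
  by (simp add: braket_def)
lemma braket_zero_left[simp]: "braket 0 x = 0"
  by (simp add: braket_def)
lemma braket_sum_right: "braket x (\<Sum>k\<in>S. f k) = (\<Sum>k\<in>S. braket x (f k))"
  by (induction S rule: infinite_finite_induct) (simp_all add: braket_add_right)
lemma braket_sum_left: "braket (\<Sum>k\<in>S. f k) x = (\<Sum>k\<in>S. braket (f k) x)"
  by (induction S rule: infinite_finite_induct) (simp_all add: braket_add_left)
lemma braket_cnj: "cnj (braket x y) = braket y x"
  by (simp add: braket_def mult.commute)

lemma norm_sq_vec: "(norm (x::complex^'n))^2 = (\<Sum>i\<in>UNIV. (cmod (x $ i))^2)"
  by (simp add: norm_vec_def L2_set_def sum_nonneg)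

lemma braket_self: "braket x x = complex_of_real ((norm x)^2)"
proof -
  have "braket x x = (\<Sum>i\<in>UNIV. complex_of_real ((cmod (x $ i))^2))"
    unfolding braket_def by (rule sum.cong) (simp_all, metis complex_norm_square mult.commute of_real_power)
  then show ?thesis by (simp add: norm_sq_vec)
qed

lemma braket_self_eq0: "braket x x = 0 \<longleftrightarrow> x = 0"
  by (simp add: braket_self)

lemma braket_adj: "braket x (A *v y) = braket (adjoint_mat A *v x) y"
proof -
  have "braket x (A *v y) = (\<Sum>i\<in>UNIV. \<Sum>j\<in>UNIV. cnj (x $ i) * A $ i $ j * y $ j)"
    by (simp add: braket_def matrix_vector_mult_def sum_distrib_left mult_ac)
  also have "\<dots> = (\<Sum>j\<in>UNIV. \<Sum>i\<in>UNIV. cnj (x $ i) * A $ i $ j * y $ j)"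
    by (rule sum.swap)
  also have "\<dots> = braket (adjoint_mat A *v x) y"
    by (simp add: braket_def matrix_vector_mult_def adjoint_mat_def sum_distrib_right sum_distrib_left mult_ac)
  finally show ?thesis .
qed

lemma braket_herm: "hermitian A \<Longrightarrow> braket x (A *v y) = braket (A *v x) y"
  using braket_adj[of x A y] by (simp add: hermitian_def)




lemma mv_diff_left: "((P::'a::comm_ring_1^'n^'m) - Q) *v v = P *v v - Q *v v"
  by (simp add: Finite_Cartesian_Product.vec_eq_iff matrix_vector_mult_def sum_subtractf algebra_simps)

lemma comm_vec:
  assumes "commutator X Y = Finite_Cartesian_Product.mat \<i> ** Z"
  shows "X *v (Y *v v) - Y *v (X *v v) = \<i> *s (Z *v (v::complex^'n))"
proof -
  have "commutator X Y *v v = (Finite_Cartesian_Product.mat \<i> ** Z) *v v" using assms by simp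
  then show ?thesis
    by (simp add: commutator_def mv_diff_left matrix_vector_mul_assoc[symmetric] mat_mv)
qed

lemma orth_indep:
  fixes S :: "(complex^'n) set"
  assumes fin: "finite S" and nz: "0 \<notin> S" and orth: "\<And>x y. x \<in> S \<Longrightarrow> y \<in> S \<Longrightarrow> x \<noteq> y \<Longrightarrow> braket x y = 0"
  shows "vec.independent S"
proof
  assume "vec.dependent S"
  then obtain u w where w: "w \<in> S" "u w \<noteq> 0" and sum0: "(\<Sum>v\<in>S. u v *s v) = 0"
    using vec.dependent_finite[OF fin] by auto
  have "0 = braket w (\<Sum>v\<in>S. u v *s v)" using sum0 by simp
  also have "\<dots> = (\<Sum>v\<in>S. u v * braket w v)" by (simp add: braket_sum_right braket_scale_right)
  also have "\<dots> = (\<Sum>v\<in>S. if v = w then u w * braket w w else 0)"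
    by (rule sum.cong) (auto simp: orth w)
  also have "\<dots> = u w * braket w w" using fin w by simp
  finally have "u w * braket w w = 0" by simp
  moreover have "braket w w \<noteq> 0" using nz w by (auto simp: braket_self_eq0)
  ultimately show False using w by simp
qed

lemma dim_univ_card: "vec.dim (UNIV :: (complex^'n) set) = CARD('n)"
  by (simp add: card_cart_basis)

lemma orth_family:
  fixes f :: "nat \<Rightarrow> complex^'n"
  assumes orth: "\<And>a b. a \<noteq> b \<Longrightarrow> braket (f a) (f b) = 0"
  shows "\<exists>k. f k = 0"
proof (rule ccontr)
  assume "\<not> (\<exists>k. f k = 0)"
  then have nz: "f k \<noteq> 0" for k by auto
  have inj: "inj_on f {..CARD('n)}"
  proof (rule inj_onI)
    fix a b assume "a \<in> {..CARD('n)}" "b \<in> {..CARD('n)}" "f a = f b"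
    then show "a = b" using orth[of a b] nz[of a] by (auto simp: braket_self_eq0)
  qed
  have "vec.independent (f ` {..CARD('n)})"
  proof (rule orth_indep)
    show "0 \<notin> f ` {..CARD('n)}" using nz by auto
    fix x y assume "x \<in> f ` {..CARD('n)}" "y \<in> f ` {..CARD('n)}" "x \<noteq> y"
    then obtain a b where "x = f a" "y = f b" "a \<noteq> b" by auto
    then show "braket x y = 0" using orth by simp
  qed simp
  then have "card (f ` {..CARD('n)}) \<le> vec.dim (UNIV :: (complex^'n) set)"
    by (intro vec.independent_card_le_dim) auto
  then have "Suc (CARD('n)) \<le> CARD('n)"
    using card_image[OF inj] by (simp add: card_cart_basis)
  then show False by simp
qed

lemma span_invariant:
  fixes M :: "complex^'n^'n"
  assumes gen: "\<And>x. x \<in> S \<Longrightarrow> M *v x \<in> vec.span S" and v: "v \<in> vec.span S"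
  shows "M *v v \<in> vec.span S"
  using v
proof (induction rule: vec.span_induct_alt)
  case base then show ?case by (simp add: mv_zero vec.span_zero)
next
  case (step c x y)
  then show ?case by (simp add: mv_add mv_scale vec.span_add vec.span_scale gen)
qed

locale su2 =
  fixes A B C :: "complex^'n^'n" and l :: nat
  assumes rep: "su2_rep A B C" and irr: "su2_irreducible A B C" and card: "CARD('n) = 2*l+1"
begin

lemma hA: "hermitian A" and hB: "hermitian B" and hC: "hermitian C"
  using rep by (auto simp: su2_rep_def)

lemma cAB: "A *v (B *v v) - B *v (A *v v) = \<i> *s (C *v v)"
  using rep comm_vec by (auto simp: su2_rep_def)
lemma cBC: "B *v (C *v v) - C *v (B *v v) = \<i> *s (A *v v)"
  using rep comm_vec by (auto simp: su2_rep_def)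
lemma cCA: "C *v (A *v v) - A *v (C *v v) = \<i> *s (B *v v)"
  using rep comm_vec by (auto simp: su2_rep_def)

lemma cAB': "A *v (B *v v) = B *v (A *v v) + \<i> *s (C *v v)"
  using cAB[of v] by (simp add: algebra_simps)
lemma cBC': "C *v (B *v v) = B *v (C *v v) - \<i> *s (A *v v)"
  using cBC[of v] by (simp add: algebra_simps)
lemma cCA': "C *v (A *v v) = A *v (C *v v) + \<i> *s (B *v v)"
  using cCA[of v] by (simp add: algebra_simps)

definition jp where "jp v = A *v v + \<i> *s (B *v v)"
definition jm where "jm v = A *v v - \<i> *s (B *v v)"

lemmas mvl = mv_add mv_diff mv_scale mv_zero

lemma jp_add: "jp (x + y) = jp x + jp y" by (simp add: jp_def mvl algebra_simps)
lemma jm_add: "jm (x + y) = jm x + jm y" by (simp add: jm_def mvl algebra_simps)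
lemma jp_scale: "jp (c *s x) = c *s jp x" by (simp add: jp_def mvl Finite_Cartesian_Product.vec_eq_iff algebra_simps)
lemma jm_scale: "jm (c *s x) = c *s jm x" by (simp add: jm_def mvl Finite_Cartesian_Product.vec_eq_iff algebra_simps)
lemma jp_zero[simp]: "jp 0 = 0" by (simp add: jp_def mvl)
lemma jm_zero[simp]: "jm 0 = 0" by (simp add: jm_def mvl)

lemma R1: "C *v jp v = jp (C *v v) + jp v"
  by (simp add: jp_def mvl cCA' cBC' Finite_Cartesian_Product.vec_eq_iff algebra_simps)

lemma R2: "C *v jm v = jm (C *v v) - jm v"
  by (simp add: jm_def mvl cCA' cBC' Finite_Cartesian_Product.vec_eq_iff algebra_simps)

lemma R3: "jp (jm v) = jm (jp v) + 2 *s (C *v v)"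
  by (simp add: jp_def jm_def mvl cAB' Finite_Cartesian_Product.vec_eq_iff algebra_simps)

lemma adj_jp: "braket x (jp y) = braket (jm x) y"
  by (simp add: jp_def jm_def braket_add_right braket_diff_left braket_scale_right braket_scale_left
      braket_herm[OF hA] braket_herm[OF hB])

lemma adj_jm: "braket x (jm y) = braket (jp x) y"
  by (simp add: jp_def jm_def braket_add_left braket_diff_right braket_scale_right braket_scale_left
      braket_herm[OF hA] braket_herm[OF hB])

lemma A_jpm: "jp v + jm v = 2 *s (A *v v)"
  by (simp add: jp_def jm_def Finite_Cartesian_Product.vec_eq_iff)
lemma B_jpm: "jp v - jm v = (2 * \<i>) *s (B *v v)"
  by (simp add: jp_def jm_def Finite_Cartesian_Product.vec_eq_iff)

lemma eig_orth:
  assumes "C *v x = \<mu> *s x" "C *v y = \<nu> *s y" "\<nu> \<noteq> cnj \<mu>"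
  shows "braket x y = 0"
proof -
  have "\<nu> * braket x y = cnj \<mu> * braket x y"
    using braket_herm[OF hC, of x y] assms by (simp add: braket_scale_right braket_scale_left)
  then show ?thesis using assms(3) by simp
qed

lemma hw_exists: "\<exists>h j. h \<noteq> 0 \<and> jp h = 0 \<and> C *v h = j *s h"
proof -
  obtain lam v where v: "v \<noteq> 0" "C *v v = lam *s v" using eigvec_exists[of C] by blast
  define f where "f k = (jp ^^ k) v" for k
  have Cf: "C *v f k = (lam + of_nat k) *s f k" for k
  proof (induction k)
    case 0 then show ?case using v by (simp add: f_def)
  next
    case (Suc k)
    have "C *v f (Suc k) = jp (C *v f k) + jp (f k)" by (simp add: f_def R1)
    also have "\<dots> = jp ((lam + of_nat k) *s f k) + jp (f k)" using Suc.IH by simp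
    also have "\<dots> = (lam + of_nat k) *s jp (f k) + jp (f k)" by (simp only: jp_scale)
    also have "\<dots> = (lam + of_nat (Suc k)) *s f (Suc k)"
      by (simp add: f_def Finite_Cartesian_Product.vec_eq_iff algebra_simps)
    finally show ?case .
  qed
  have "\<exists>k. f k = 0"
  proof (rule orth_family)
    fix a b :: nat assume ab: "a \<noteq> b"
    show "braket (f a) (f b) = 0"
    proof (rule eig_orth[OF Cf Cf])
      show "lam + of_nat b \<noteq> cnj (lam + of_nat a)"
      proof
        assume "lam + of_nat b = cnj (lam + of_nat a)"
        then have "Re (lam + of_nat b) = Re (cnj (lam + of_nat a))" by simp
        then show False using ab by simp
      qed
    qed
  qed
  then have ex: "\<exists>k. f k = 0" .
  define k0 where "k0 = (LEAST k. f k = 0)"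
  have fk0: "f k0 = 0" unfolding k0_def by (rule LeastI_ex[OF ex])
  have k0: "k0 \<noteq> 0"
  proof
    assume "k0 = 0" then have "f k0 = v" by (simp add: f_def)
    with fk0 v show False by simp
  qed
  have "f (k0 - 1) \<noteq> 0" unfolding k0_def by (rule not_less_Least) (use k0 k0_def in simp)
  moreover have "jp (f (k0 - 1)) = 0" using fk0 k0 by (cases k0) (simp_all add: f_def)
  ultimately show ?thesis using Cf by blast
qed

lemma A_from: "A *v v = (1/2) *s (jp v + jm v)"
  by (simp add: A_jpm Finite_Cartesian_Product.vec_eq_iff)
lemma B_from: "B *v v = (1/(2*\<i>)) *s (jp v - jm v)"
  by (simp add: B_jpm Finite_Cartesian_Product.vec_eq_iff)

lemma basis_exists:
  "\<exists>e. (\<forall>k. C *v e k = (of_nat l - of_nat k) *s e k) \<and> (\<forall>k. jm (e k) = e (Suc k)) \<and>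
       (\<forall>k. jp (e (Suc k)) = (of_nat (Suc k) * (2 * of_nat l - of_nat k)) *s e k) \<and> jp (e 0) = 0 \<and>
       (\<forall>k. e k \<noteq> 0 \<longleftrightarrow> k \<le> 2*l) \<and> (\<forall>a b. a \<noteq> b \<longrightarrow> braket (e a) (e b) = 0) \<and>
       vec.span (e ` {..2*l}) = UNIV"
proof -
  obtain h j where h: "h \<noteq> 0" "jp h = 0" "C *v h = j *s h" using hw_exists by blast
  define e where "e k = (jm ^^ k) h" for k
  have e0: "e 0 = h" and eS: "e (Suc k) = jm (e k)" for k by (simp_all add: e_def)
  have Ce: "C *v e k = (j - of_nat k) *s e k" for k
  proof (induction k)
    case 0 show ?case using h by (simp add: e0)
  next
    case (Suc k)
    have "C *v e (Suc k) = jm (C *v e k) - jm (e k)" by (simp add: eS R2)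
    also have "\<dots> = jm ((j - of_nat k) *s e k) - jm (e k)" using Suc.IH by simp
    also have "\<dots> = (j - of_nat k) *s jm (e k) - jm (e k)" by (simp only: jm_scale)
    also have "\<dots> = (j - of_nat (Suc k)) *s e (Suc k)"
      by (simp add: eS Finite_Cartesian_Product.vec_eq_iff algebra_simps)
    finally show ?case .
  qed
  have jpe: "jp (e (Suc k)) = (of_nat (Suc k) * (2 * j - of_nat k)) *s e k" for k
  proof (induction k)
    case 0
    have "jp (e (Suc 0)) = jm (jp h) + 2 *s (C *v h)" by (simp add: eS e0 R3)
    then show ?case using h by (simp add: e0 Finite_Cartesian_Product.vec_eq_iff)
  next
    case (Suc k)
    have "jp (e (Suc (Suc k))) = jm (jp (e (Suc k))) + 2 *s (C *v e (Suc k))"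
      by (simp only: eS[of "Suc k"] R3)
    also have "\<dots> = jm ((of_nat (Suc k) * (2 * j - of_nat k)) *s e k) + 2 *s ((j - of_nat (Suc k)) *s e (Suc k))"
      using Suc.IH Ce by simp
    also have "\<dots> = (of_nat (Suc k) * (2 * j - of_nat k)) *s e (Suc k) + 2 *s ((j - of_nat (Suc k)) *s e (Suc k))"
      by (simp only: jm_scale eS)
    also have "\<dots> = (of_nat (Suc (Suc k)) * (2 * j - of_nat (Suc k))) *s e (Suc k)"
      by (simp add: Finite_Cartesian_Product.vec_eq_iff algebra_simps)
    finally show ?case .
  qed
  have orth: "braket (e a) (e b) = 0" if ab: "a \<noteq> b" for a b
  proof (rule eig_orth[OF Ce Ce])
    show "j - of_nat b \<noteq> cnj (j - of_nat a)"
    proof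
      assume "j - of_nat b = cnj (j - of_nat a)"
      then have "Re (j - of_nat b) = Re (cnj (j - of_nat a))" by simp
      then show False using ab by simp
    qed
  qed
  have ex: "\<exists>k. e k = 0" by (rule orth_family) (use orth in blast)
  define K where "K = (LEAST k. e k = 0)"
  have eK: "e K = 0" unfolding K_def by (rule LeastI_ex[OF ex])
  have K0: "K \<noteq> 0"
  proof
    assume "K = 0" then show False using eK h e0 by simp
  qed
  define N where "N = K - 1"
  have KN: "K = Suc N" using K0 N_def by simp
  have enz: "e k \<noteq> 0" if "k \<le> N" for k
    unfolding K_def[symmetric] using not_less_Least[of k "\<lambda>k. e k = 0"] that KN K_def by auto
  have eKm: "e (K + m) = 0" for m
    by (induction m) (simp_all add: eK eS)
  have ez: "e k = 0" if "N < k" for k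
    using eKm[of "k - K"] that KN by simp
  have "jp (e (Suc N)) = 0" using eK KN by simp
  then have "(of_nat (Suc N) * (2 * j - of_nat N)) *s e N = 0" using jpe[of N] by simp
  then have "of_nat (Suc N) * (2 * j - of_nat N) = 0" using enz[of N] by (simp add: vec.scale_eq_0_iff)
  then have "2 * j - of_nat N = 0" by (metis mult_eq_0_iff of_nat_eq_0_iff nat.simps(3))
  then have j2: "2 * j = of_nat N" by simp
  define W where "W = vec.span (e ` {..N})"
  have eW: "e k \<in> W" for k
    unfolding W_def by (cases "k \<le> N") (auto simp: ez vec.span_zero intro: vec.span_base)
  have jpW: "jp (e k) \<in> W" for k
    by (cases k) (simp_all add: h e0 W_def vec.span_zero jpe vec.span_scale eW[unfolded W_def])
  have jmW: "jm (e k) \<in> W" for k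
    using eW[of "Suc k"] by (simp add: eS)
  have AW: "A *v v \<in> W" if "v \<in> W" for v
    unfolding W_def
    by (rule span_invariant[OF _ that[unfolded W_def]])
       (auto simp: A_from vec.span_scale vec.span_add jpW[unfolded W_def] jmW[unfolded W_def])
  have BW: "B *v v \<in> W" if "v \<in> W" for v
    unfolding W_def
    by (rule span_invariant[OF _ that[unfolded W_def]])
       (auto simp: B_from vec.span_scale vec.span_diff jpW[unfolded W_def] jmW[unfolded W_def])
  have CW: "C *v v \<in> W" if "v \<in> W" for v
    unfolding W_def
    by (rule span_invariant[OF _ that[unfolded W_def]])
       (auto simp: Ce vec.span_scale vec.span_diff eW[unfolded W_def])
  have sub: "csubspace_vec W"
    unfolding csubspace_vec_def W_def by (auto simp: vec.span_zero vec.span_add vec.span_scale)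
  have "W = {0} \<or> W = UNIV"
    using irr sub AW BW CW unfolding su2_irreducible_def by blast
  moreover have "W \<noteq> {0}" using eW[of 0] h e0 by auto
  ultimately have WU: "W = UNIV" by simp
  have "CARD('n) = vec.dim (UNIV :: (complex^'n) set)" by (simp add: card_cart_basis)
  also have "\<dots> \<le> card (e ` {..N})"
    by (rule vec.dim_le_card) (use WU W_def in auto)
  also have "\<dots> \<le> Suc N" using card_image_le[of "{..N}" e] by simp
  finally have le1: "CARD('n) \<le> Suc N" .
  have inj: "inj_on e {..N}"
  proof (rule inj_onI)
    fix a b assume ab: "a \<in> {..N}" "b \<in> {..N}" "e a = e b"
    show "a = b"
    proof (rule ccontr)
      assume "a \<noteq> b"
      then have "braket (e a) (e a) = 0" using orth[of a b] ab by simp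
      then show False using enz[of a] ab by (simp add: braket_self_eq0)
    qed
  qed
  have "vec.independent (e ` {..N})"
  proof (rule orth_indep)
    show "0 \<notin> e ` {..N}" using enz by auto
    fix x y assume "x \<in> e ` {..N}" "y \<in> e ` {..N}" "x \<noteq> y"
    then obtain a b where "x = e a" "y = e b" "a \<noteq> b" by auto
    then show "braket x y = 0" using orth by simp
  qed simp
  then have "card (e ` {..N}) \<le> vec.dim (UNIV :: (complex^'n) set)"
    by (intro vec.independent_card_le_dim) auto
  then have le2: "Suc N \<le> CARD('n)" using card_image[OF inj] by (simp add: card_cart_basis)
  have NL: "N = 2 * l" using le1 le2 card by simp
  have jl: "j = of_nat l" using j2 NL by simp
  show ?thesis
  proof (intro exI conjI allI impI)
    show "C *v e k = (of_nat l - of_nat k) *s e k" for k using Ce jl by simp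
    show "jm (e k) = e (Suc k)" for k by (simp add: eS)
    show "jp (e (Suc k)) = (of_nat (Suc k) * (2 * of_nat l - of_nat k)) *s e k" for k using jpe jl by simp
    show "jp (e 0) = 0" using h e0 by simp
    show "e k \<noteq> 0 \<longleftrightarrow> k \<le> 2*l" for k using enz ez NL by (metis not_le)
    show "braket (e a) (e b) = 0" if "a \<noteq> b" for a b using orth that by simp
    show "vec.span (e ` {..2*l}) = UNIV" using WU W_def NL by simp
  qed
qed

end



definition cb :: "nat \<Rightarrow> real" where "cb m = real ((2*m) choose m)"

lemma cb_rec_nat: "((2*Suc m) choose (Suc m)) * Suc m = 2 * (2 * m + 1) * ((2*m) choose m)"
proof -
  have e1: "Suc (Suc (2*m)) * (Suc (2*m) choose m) = ((2*Suc m) choose (Suc m)) * Suc m"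
    using Suc_times_binomial_eq[of "Suc (2*m)" m] by simp
  have e2: "Suc (2*m) * ((2*m) choose m) = (Suc (2*m) choose Suc m) * Suc m"
    using Suc_times_binomial_eq[of "2*m" m] by simp
  have e3: "(Suc (2*m) choose Suc m) = (Suc (2*m) choose m)"
    using binomial_symmetric[of m "Suc (2*m)"] by simp
  have "((2*Suc m) choose (Suc m)) * Suc m * Suc m = Suc (Suc (2*m)) * (Suc (2*m) choose m) * Suc m"
    using e1 by (simp only:)
  also have "\<dots> = Suc (Suc (2*m)) * (Suc (2*m) * ((2*m) choose m))"
    using e2 e3 by (metis mult.assoc)
  also have "\<dots> = 2 * (2 * m + 1) * ((2*m) choose m) * Suc m" 
  proof -
    have "\<And>Z::nat. Suc (Suc (2*m)) * (Suc (2*m) * Z) = 2 * (2 * m + 1) * Z * Suc m" by (simp add: algebra_simps)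
    then show ?thesis by blast
  qed
  finally have "((2*Suc m) choose (Suc m)) * Suc m * Suc m = 2 * (2 * m + 1) * ((2*m) choose m) * Suc m" .
  then show ?thesis by (metis mult_right_cancel nat.distinct(1))
qed

lemma cb_rec: "cb (Suc m) * real (Suc m) = 2 * (2 * real m + 1) * cb m"
proof -
  have "real (((2*Suc m) choose (Suc m)) * Suc m) = real (2 * (2 * m + 1) * ((2*m) choose m))"
    using cb_rec_nat by metis
  moreover have "cb (Suc m) * real (Suc m) = real (((2*Suc m) choose (Suc m)) * Suc m)"
    by (simp only: cb_def of_nat_mult)
  moreover have "2 * (2 * real m + 1) * cb m = real (2 * (2 * m + 1) * ((2*m) choose m))"
    by (simp only: cb_def of_nat_mult of_nat_add of_nat_numeral of_nat_1)
  ultimately show ?thesis by simp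
qed

lemma gb_rec: "(a::real) gchoose (Suc k) = (a gchoose k) * (a - of_nat k) / of_nat (Suc k)"
  by (metis gbinomial_absorb_comp gbinomial_absorption mult.commute
    nonzero_mult_div_cancel_left of_nat_neq_0)

lemma cb_gbin: "cb m = (-4)^m * ((-1/2::real) gchoose m)"
proof (induction m)
  case 0 then show ?case by (simp add: cb_def)
next
  case (Suc m)
  have "cb (Suc m) = cb (Suc m) * real (Suc m) / real (Suc m)" by simp
  also have "\<dots> = 2 * (2 * real m + 1) * cb m / real (Suc m)" by (simp only: cb_rec)
  finally have "cb (Suc m) = 2 * (2 * real m + 1) * cb m / real (Suc m)" .
  also have "\<dots> = (-4)^(Suc m) * ((-1/2::real) gchoose (Suc m))"
  proof -
    have "\<And>g::real. 2 * (2 * real m + 1) * ((-4)^m * g) / real (Suc m) = (-4)^(Suc m) * (g * (-1/2 - of_nat m) / of_nat (Suc m))"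
    proof -
      fix g :: real
      have a: "(-4) * (-1/2 - of_nat m :: real) = 2 * (2 * real m + 1)" by simp
      have "(-4::real)^(Suc m) * (g * (-1/2 - of_nat m) / of_nat (Suc m)) = ((-4) * (-1/2 - of_nat m)) * ((-4)^m * g) / of_nat (Suc m)"
        by (simp only: power_Suc times_divide_eq_right mult_ac)
      then show "2 * (2 * real m + 1) * ((-4)^m * g) / real (Suc m) = (-4)^(Suc m) * (g * (-1/2 - of_nat m) / of_nat (Suc m))"
        by (simp only: a)
    qed
    then show ?thesis unfolding Suc gb_rec by blast
  qed
  finally show ?case .
qed

lemma I1: "(\<Sum>m=0..l. cb m * cb (l - m)) = 4^l"
proof -
  have "(\<Sum>m=0..l. cb m * cb (l - m)) = (\<Sum>m=0..l. (-4)^l * (((-1/2::real) gchoose m) * ((-1/2) gchoose (l-m))))"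
  proof (rule sum.cong)
    fix m assume "m \<in> {0..l}"
    then have "(-4::real)^m * (-4)^(l-m) = (-4)^l" by (metis power_add atLeastAtMost_iff le_add_diff_inverse)
    then show "cb m * cb (l - m) = (-4)^l * (((-1/2::real) gchoose m) * ((-1/2) gchoose (l-m)))"
      unfolding cb_gbin by (simp only: mult_ac flip: \<open>(-4::real)^m * (-4)^(l-m) = (-4)^l\<close>)
  qed simp
  also have "\<dots> = (-4)^l * (\<Sum>m=0..l. ((-1/2::real) gchoose m) * ((-1/2) gchoose (l-m)))"
    by (simp only: sum_distrib_left)
  also have "\<dots> = (-4)^l * ((-1/2 + -1/2::real) gchoose l)"
    by (simp only: gbinomial_Vandermonde)
  also have "\<dots> = (-4)^l * (-1)^l"
  proof -
    have m1: "(-1/2 + -1/2::real) = - 1" by simp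
    have "((- 1::real) gchoose l) = (-1)^l * ((1 + of_nat l - 1) gchoose l)"
      by (rule gbinomial_minus)
    also have "(1 + of_nat l - 1 :: real) = of_nat l" by simp
    also have "((of_nat l :: real) gchoose l) = 1"
      using binomial_gbinomial[of l l] by simp
    finally show ?thesis unfolding m1 by simp
  qed
  also have "(-4::real)^l * (-1)^l = 4^l" by (simp add: power_mult_distrib[symmetric])
  finally show ?thesis .
qed


lemma sum_even_odd: "(\<Sum>k=0..2*p. f k) = (\<Sum>q=0..p. f (2*q)) + (\<Sum>q<p. f (2*q+1::nat)) "
  for f :: "nat \<Rightarrow> real"
proof (induction p)
  case 0 then show ?case by simp
next
  case (Suc p)
  have "(\<Sum>k=0..2*Suc p. f k) = (\<Sum>k=0..2*p. f k) + f (2*p+1) + f (2*p+2)"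
    by (simp add: sum.atLeast0_atMost_Suc)
  then show ?case using Suc by (simp add: sum.atLeast0_atMost_Suc)
qed

lemma alt_sum: "(\<Sum>i=0..n. (-1::real)^i) = (if even n then 1 else 0)"
  by (induction n) (auto simp: sum.atLeast0_atMost_Suc)

lemma cb0[simp]: "cb 0 = 1" by (simp add: cb_def)

lemma I2: "(\<Sum>m=0..l. (-1)^m * cb m * cb (l - m)) = (if even l then 4^(l div 2) * cb (l div 2) else 0)"
proof -
  define F where "F = Abs_fps cb"
  define Fm where "Fm = Abs_fps (\<lambda>m. (-1)^m * cb m)"
  define G where "G = Fm * F"
  define H where "H = Abs_fps (\<lambda>n. if even n then 4^(n div 2) * cb (n div 2) else 0 :: real)"
  have FF: "F * F = Abs_fps (\<lambda>n. 4^n)"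
    by (simp add: fps_eq_iff fps_mult_nth F_def I1)
  have FmFm: "Fm * Fm = Abs_fps (\<lambda>n. (-4)^n)"
  proof -
    have "fps_nth (Fm * Fm) n = (-4)^n" for n
    proof -
      have "fps_nth (Fm * Fm) n = (\<Sum>i=0..n. (-1)^n * (cb i * cb (n-i)))"
        unfolding fps_mult_nth Fm_def fps_nth_Abs_fps
      proof (rule sum.cong)
        fix i assume "i \<in> {0..n}"
        then have P: "(-1::real)^i * (-1)^(n-i) = (-1)^n" by (metis power_add atLeastAtMost_iff le_add_diff_inverse)
        show "(-1) ^ i * cb i * ((-1) ^ (n - i) * cb (n - i)) = (-1)^n * (cb i * cb (n-i))"
          by (simp only: mult_ac flip: P)
      qed simp
      also have "\<dots> = (-1)^n * 4^n" by (simp add: sum_distrib_left[symmetric] I1)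
      finally show ?thesis by (simp add: power_mult_distrib[symmetric])
    qed
    then show ?thesis by (simp add: fps_eq_iff)
  qed
  have GG: "G * G = Abs_fps (\<lambda>n. if even n then 4^n else 0)"
  proof -
    have "G * G = (Fm * Fm) * (F * F)" by (simp add: G_def ac_simps)
    moreover have "fps_nth ((Fm * Fm) * (F * F)) n = (if even n then 4^n else 0)" for n
    proof -
      have "fps_nth ((Fm * Fm) * (F * F)) n = (\<Sum>i=0..n. 4^n * (-1)^i)"
        unfolding fps_mult_nth FF FmFm fps_nth_Abs_fps
      proof (rule sum.cong)
        fix i assume "i \<in> {0..n}"
        then have P: "(4::real)^i * 4^(n-i) = 4^n" by (metis power_add atLeastAtMost_iff le_add_diff_inverse)
        have Q: "(-4::real)^i = (-1)^i * 4^i" by (subst power_mult_distrib[symmetric]) simp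
        show "(-4::real) ^ i * 4 ^ (n - i) = 4^n * (-1)^i"
          by (simp only: Q mult_ac flip: P)
      qed simp
      also have "\<dots> = 4^n * (\<Sum>i=0..n. (-1)^i)" by (simp add: sum_distrib_left)
      finally show ?thesis by (simp add: alt_sum)
    qed
    ultimately show ?thesis by (simp add: fps_eq_iff)
  qed
  have HH: "H * H = Abs_fps (\<lambda>n. if even n then 4^n else 0)"
  proof -
    have "fps_nth (H * H) n = (if even n then 4^n else 0)" for n
    proof (cases "even n")
      case False
      have "fps_nth (H * H) n = (\<Sum>i=0..n. 0)"
        unfolding fps_mult_nth H_def fps_nth_Abs_fps
        by (rule sum.cong) (use False in auto)
      then show ?thesis using False by simp
    next
      case True
      then obtain p where p: "n = 2 * p" by blast
      have "fps_nth (H * H) n = (\<Sum>q=0..p. 4^p * (cb q * cb (p - q))) + (\<Sum>q<p. 0)"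
        unfolding fps_mult_nth p sum_even_odd
      proof (intro arg_cong2[where f="(+)"] sum.cong)
        fix q assume q: "q \<in> {0..p}"
        then have e: "2 * p - 2 * q = 2 * (p - q)" by simp
        have "(4::real)^q * 4^(p-q) = 4^p" using q by (metis power_add atLeastAtMost_iff le_add_diff_inverse)
        then show "fps_nth H (2 * q) * fps_nth H (2 * p - 2 * q) = 4 ^ p * (cb q * cb (p - q))"
          unfolding H_def fps_nth_Abs_fps e by (simp add: mult_ac)
      next
        fix q assume q: "q \<in> {..<p}"
        then show "fps_nth H (2 * q + 1) * fps_nth H (2 * p - (2 * q + 1)) = 0"
          unfolding H_def by simp
      qed auto
      also have "\<dots> = 4^p * 4^p" by (simp add: sum_distrib_left[symmetric] I1)
      finally show ?thesis using p by (simp add: power_add[symmetric] mult_2)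
    qed
    then show ?thesis by (simp add: fps_eq_iff)
  qed
  have "(G - H) * (G + H) = 0" using GG HH by (simp add: algebra_simps)
  moreover have "fps_nth (G + H) 0 = 2" by (simp add: G_def H_def F_def Fm_def fps_mult_nth)
  then have "G + H \<noteq> 0" by (metis fps_zero_nth zero_neq_numeral)
  ultimately have "G - H = 0" by (simp only: mult_eq_0_iff) blast
  then have "fps_nth G l = fps_nth H l" by simp
  moreover have "fps_nth G l = (\<Sum>m=0..l. (-1)^m * cb m * cb (l - m))"
    unfolding G_def fps_mult_nth Fm_def F_def fps_nth_Abs_fps by (simp only: mult.assoc)
  moreover have "fps_nth H l = (if even l then 4^(l div 2) * cb (l div 2) else 0)"
    unfolding H_def by simp
  ultimately show ?thesis by simp
qed





fun gam :: "nat \<Rightarrow> nat \<Rightarrow> real" where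
  "gam l 0 = 1" | "gam l (Suc 0) = 0"
| "gam l (Suc (Suc k)) = - (real (Suc k) * (2 * real l - real k)) * gam l k"

fun dlt :: "nat \<Rightarrow> nat \<Rightarrow> real" where
  "dlt l 0 = 1" | "dlt l (Suc 0) = 0"
| "dlt l (Suc (Suc k)) = (real (Suc k) * (2 * real l - real k)) * dlt l k"

lemma gam_odd: "gam l (2*m+1) = 0"
  by (induction m) (simp_all add: numeral_2_eq_2)
lemma dlt_odd: "dlt l (2*m+1) = 0"
  by (induction m) (simp_all add: numeral_2_eq_2)
lemma gam_odd'[simp]: "gam l (Suc (2*m)) = 0"
  using gam_odd[of l m] by simp
lemma dlt_odd'[simp]: "dlt l (Suc (2*m)) = 0"
  using dlt_odd[of l m] by simp
lemma m1sq[simp]: "((-1::real)^q)^2 = 1"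
  by (induction q) (simp_all add: power2_eq_square)

lemma dlt_even: "dlt l (2*m) = (-1)^m * gam l (2*m)"
proof (induction m)
  case 0 then show ?case by simp
next
  case (Suc m)
  have e: "2 * Suc m = Suc (Suc (2*m))" by simp
  show ?case unfolding e using Suc by simp
qed

lemma cb_pos: "cb m > 0"
  by (simp add: cb_def)

lemma dlt_sq: "(dlt l k)^2 = (gam l k)^2"
proof (cases "even k")
  case True
  then obtain q where "k = 2*q" by blast
  then show ?thesis by (simp add: dlt_even power_mult_distrib)
next
  case False
  then obtain q where "k = 2*q+1" using oddE by blast
  then show ?thesis by (simp add: dlt_odd gam_odd)
qed

lemma gam_dlt: "gam l k * dlt l k = (if even k then (-1)^(k div 2) * (gam l k)^2 else 0)"
proof (cases "even k")
  case True
  then obtain q where "k = 2*q" by blast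
  then show ?thesis by (simp add: dlt_even power2_eq_square)
next
  case False
  then obtain q where "k = 2*q+1" using oddE by blast
  then show ?thesis by (simp add: dlt_odd gam_odd)
qed

lemma norm_one: "braket v v = 1 \<Longrightarrow> norm v = 1"
proof -
  assume "braket v v = 1"
  then have "(norm v)^2 = 1" using braket_self[of v] by (metis of_real_eq_1_iff)
  then show "norm v = 1" using norm_ge_zero[of v] by (auto simp: power2_eq_1_iff)
qed

lemma braket_ofreal: "braket (complex_of_real a *s u) (complex_of_real b *s v) = complex_of_real (a * b) * braket u v"
  by (simp add: braket_scale_left braket_scale_right)

locale su2b = su2 A B C l for A B C :: "complex^'n^'n" and l :: nat +
  fixes e :: "nat \<Rightarrow> complex^'n"
  assumes Ce: "C *v e k = (of_nat l - of_nat k) *s e k"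
    and jme: "jm (e k) = e (Suc k)"
    and jpe: "jp (e (Suc k)) = (of_nat (Suc k) * (2 * of_nat l - of_nat k)) *s e k"
    and jpe0: "jp (e 0) = 0"
    and enz: "e k \<noteq> 0 \<longleftrightarrow> k \<le> 2*l"
    and orth: "a \<noteq> b \<Longrightarrow> braket (e a) (e b) = 0"
    and span: "vec.span (e ` {..2*l}) = UNIV"
begin

definition Nr :: "nat \<Rightarrow> real" where "Nr k = (norm (e k))^2"

lemma Nr_braket: "braket (e k) (e k) = complex_of_real (Nr k)"
  by (simp add: Nr_def braket_self)

lemma Nr_pos: "k \<le> 2*l \<Longrightarrow> Nr k > 0"
  using enz[of k] by (simp add: Nr_def)

lemma inj_e: "inj_on e {..2*l}"
proof (rule inj_onI)
  fix a b assume ab: "a \<in> {..2*l}" "b \<in> {..2*l}" "e a = e b"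
  show "a = b"
  proof (rule ccontr)
    assume "a \<noteq> b"
    then have "braket (e a) (e a) = 0" using orth[of a b] ab by simp
    then show False using enz[of a] ab by (simp add: braket_self_eq0)
  qed
qed

lemma braket_e_sum: "j \<le> 2*l \<Longrightarrow> braket (e j) (\<Sum>k\<le>2*l. u k *s e k) = u j * braket (e j) (e j)"
proof -
  assume j: "j \<le> 2*l"
  have "braket (e j) (\<Sum>k\<le>2*l. u k *s e k) = (\<Sum>k\<le>2*l. u k * braket (e j) (e k))"
    by (simp add: braket_sum_right braket_scale_right)
  also have "\<dots> = (\<Sum>k\<le>2*l. if k = j then u j * braket (e j) (e j) else 0)"
    by (rule sum.cong) (auto simp: orth)
  also have "\<dots> = u j * braket (e j) (e j)" using j by simp
  finally show ?thesis .
qed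

lemma expand: "v = (\<Sum>k\<le>2*l. (braket (e k) v / braket (e k) (e k)) *s e k)"
proof -
  have "v \<in> vec.span (e ` {..2*l})" using span by simp
  then obtain u where u: "v = (\<Sum>w\<in>e ` {..2*l}. u w *s w)"
    using vec.span_finite[of "e ` {..2*l}"] by auto
  then have v: "v = (\<Sum>k\<le>2*l. u (e k) *s e k)"
    by (simp add: sum.reindex[OF inj_e])
  have "u (e k) = braket (e k) v / braket (e k) (e k)" if "k \<le> 2*l" for k
    using braket_e_sum[OF that, of "\<lambda>k. u (e k)"] v Nr_braket Nr_pos[OF that] by simp
  then show ?thesis by (subst v) (rule sum.cong, auto)
qed

lemma complete: "(\<And>k. k \<le> 2*l \<Longrightarrow> braket (e k) v = 0) \<Longrightarrow> v = 0"
  using expand[of v] by simp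

lemma parseval: "braket v w = (\<Sum>k\<le>2*l. cnj (braket (e k) v) * braket (e k) w / braket (e k) (e k))"
proof -
  have "braket v w = braket v (\<Sum>k\<le>2*l. (braket (e k) w / braket (e k) (e k)) *s e k)"
    using expand[of w] by simp
  also have "\<dots> = (\<Sum>k\<le>2*l. (braket (e k) w / braket (e k) (e k)) * braket v (e k))"
    by (simp add: braket_sum_right braket_scale_right)
  also have "\<dots> = (\<Sum>k\<le>2*l. cnj (braket (e k) v) * braket (e k) w / braket (e k) (e k))"
    by (rule sum.cong) (simp_all add: braket_cnj)
  finally show ?thesis .
qed

lemma Nr_rec: "Nr (Suc k) = real (Suc k) * (2 * real l - real k) * Nr k"
proof -
  have "braket (e (Suc k)) (e (Suc k)) = braket (jm (e k)) (e (Suc k))" by (simp add: jme)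
  also have "\<dots> = braket (e k) (jp (e (Suc k)))" by (simp add: adj_jp)
  also have "\<dots> = (of_nat (Suc k) * (2 * of_nat l - of_nat k)) * braket (e k) (e k)"
    by (simp add: jpe braket_scale_right)
  finally have "complex_of_real (Nr (Suc k)) = complex_of_real (real (Suc k) * (2 * real l - real k) * Nr k)"
    by (simp add: Nr_braket)
  then show ?thesis by (simp only: of_real_eq_iff)
qed

lemma kerC: "C *v v = 0 \<Longrightarrow> v = (braket (e l) v / braket (e l) (e l)) *s e l"
proof -
  assume Cv: "C *v v = 0"
  have z: "braket (e k) v = 0" if "k \<noteq> l" for k
  proof -
    have "0 = braket (e k) (C *v v)" using Cv by simp
    also have "\<dots> = braket (C *v e k) v" by (simp add: braket_herm[OF hC])
    also have "\<dots> = (of_nat l - of_nat k) * braket (e k) v" by (simp only: Ce braket_scale_left) simp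
    finally show ?thesis using that by simp
  qed
  have "v = (\<Sum>k\<le>2*l. (braket (e k) v / braket (e k) (e k)) *s e k)" by (rule expand)
  also have "\<dots> = (\<Sum>k\<le>2*l. if k = l then (braket (e l) v / braket (e l) (e l)) *s e l else 0)"
    by (rule sum.cong) (auto simp: z)
  also have "\<dots> = (braket (e l) v / braket (e l) (e l)) *s e l" by simp
  finally show ?thesis .
qed

lemma el_ker: "C *v e l = 0" by (simp add: Ce)
lemma el_nz: "e l \<noteq> 0" using enz[of l] by simp

lemma q_cnj: "cnj (of_nat (Suc k) * (2 * of_nat l - of_nat k) :: complex) = of_nat (Suc k) * (2 * of_nat l - of_nat k)"
  by simp

lemma coef_rel:
  "braket (e (Suc k)) (jp v) = braket (e (Suc (Suc k))) v"
  "braket (e (Suc k)) (jm v) = (of_nat (Suc k) * (2 * of_nat l - of_nat k)) * braket (e k) v"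
  "braket (e 0) (jm v) = 0"
  "braket (e 0) (jp v) = braket (e 1) v"
  by (simp_all add: adj_jp adj_jm jme jpe jpe0 braket_scale_left)

lemma coefA:
  assumes Av: "A *v v = 0"
  shows "braket (e k) v = braket (e 0) v * complex_of_real (gam l k)"
proof -
  have s0: "jp v + jm v = 0" using A_jpm[of v] Av by (simp add: mv_zero)
  have c1: "braket (e 1) v = 0"
    using arg_cong[OF s0, of "braket (e 0)"] by (simp add: braket_add_right coef_rel)
  have rec: "braket (e (Suc (Suc k))) v = - (of_nat (Suc k) * (2 * of_nat l - of_nat k)) * braket (e k) v" for k
    using arg_cong[OF s0, of "braket (e (Suc k))"] by (simp add: braket_add_right coef_rel eq_neg_iff_add_eq_0)
  have "braket (e k) v = braket (e 0) v * complex_of_real (gam l k) \<and>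
        braket (e (Suc k)) v = braket (e 0) v * complex_of_real (gam l (Suc k))"
  proof (induction k)
    case 0 then show ?case using c1 by simp
  next
    case (Suc k)
    then show ?case by (simp add: rec)
  qed
  then show ?thesis by simp
qed

lemma coefB:
  assumes Bv: "B *v v = 0"
  shows "braket (e k) v = braket (e 0) v * complex_of_real (dlt l k)"
proof -
  have s0: "jp v - jm v = 0" using B_jpm[of v] Bv by (simp add: mv_zero)
  have c1: "braket (e 1) v = 0"
    using arg_cong[OF s0, of "braket (e 0)"] by (simp add: braket_diff_right coef_rel)
  have rec: "braket (e (Suc (Suc k))) v = (of_nat (Suc k) * (2 * of_nat l - of_nat k)) * braket (e k) v" for k
    using arg_cong[OF s0, of "braket (e (Suc k))"] by (simp add: braket_diff_right coef_rel)
  have "braket (e k) v = braket (e 0) v * complex_of_real (dlt l k) \<and>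
        braket (e (Suc k)) v = braket (e 0) v * complex_of_real (dlt l (Suc k))"
  proof (induction k)
    case 0 then show ?case using c1 by simp
  next
    case (Suc k)
    then show ?case by (simp add: rec)
  qed
  then show ?thesis by simp
qed

lemma xhat:
  assumes "w \<noteq> 0" "A *v w = 0"
  shows "\<exists>x. A *v x = 0 \<and> (\<forall>k. braket (e k) x = complex_of_real (gam l k))"
proof -
  define c0 where "c0 = braket (e 0) w"
  have cw: "braket (e k) w = c0 * complex_of_real (gam l k)" for k
    unfolding c0_def by (rule coefA[OF assms(2)])
  have "c0 \<noteq> 0"
  proof
    assume "c0 = 0"
    then have "braket (e k) w = 0" for k using cw[of k] by simp
    then have "w = 0" by (rule complete)
    with assms show False by simp
  qed
  show ?thesis
  proof (intro exI conjI allI)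
    have "A *v ((1/c0) *s w) = (1/c0) *s (A *v w)" by (rule mv_scale)
    then show "A *v ((1/c0) *s w) = 0" using assms(2) by simp
    fix k
    have "braket (e k) ((1/c0) *s w) = (1/c0) * braket (e k) w" by (rule braket_scale_right)
    also have "\<dots> = (1/c0) * (c0 * complex_of_real (gam l k))" by (simp only: cw)
    also have "\<dots> = complex_of_real (gam l k)" using \<open>c0 \<noteq> 0\<close> by simp
    finally show "braket (e k) ((1/c0) *s w) = complex_of_real (gam l k)" .
  qed
qed

lemma yhat:
  assumes "w \<noteq> 0" "B *v w = 0"
  shows "\<exists>y. B *v y = 0 \<and> (\<forall>k. braket (e k) y = complex_of_real (dlt l k))"
proof -
  define c0 where "c0 = braket (e 0) w"
  have cw: "braket (e k) w = c0 * complex_of_real (dlt l k)" for k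
    unfolding c0_def by (rule coefB[OF assms(2)])
  have "c0 \<noteq> 0"
  proof
    assume "c0 = 0"
    then have "braket (e k) w = 0" for k using cw[of k] by simp
    then have "w = 0" by (rule complete)
    with assms show False by simp
  qed
  show ?thesis
  proof (intro exI conjI allI)
    have "B *v ((1/c0) *s w) = (1/c0) *s (B *v w)" by (rule mv_scale)
    then show "B *v ((1/c0) *s w) = 0" using assms(2) by simp
    fix k
    have "braket (e k) ((1/c0) *s w) = (1/c0) * braket (e k) w" by (rule braket_scale_right)
    also have "\<dots> = (1/c0) * (c0 * complex_of_real (dlt l k))" by (simp only: cw)
    also have "\<dots> = complex_of_real (dlt l k)" using \<open>c0 \<noteq> 0\<close> by simp
    finally show "braket (e k) ((1/c0) *s w) = complex_of_real (dlt l k)" .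
  qed
qed

lemma key: "m \<le> l \<Longrightarrow> (gam l (2*m))^2 * cb l * Nr 0 = cb m * cb (l - m) * Nr (2*m)"
proof (induction m)
  case 0 then show ?case by simp
next
  case (Suc m)
  then have ml: "m < l" by simp
  have ra: "cb (Suc m) * (real m + 1) = 2 * (2 * real m + 1) * cb m"
    using cb_rec[of m] by (simp add: algebra_simps)
  have lm: "Suc (l - Suc m) = l - m" using ml by simp
  have rb: "cb (l - m) * (real l - real m) = 2 * (2 * (real l - real m - 1) + 1) * cb (l - Suc m)"
    using cb_rec[of "l - Suc m"] ml unfolding lm by (simp add: of_nat_diff)
  have u: "(2*real m+1) * (2*real l - 2*real m) * (cb m * cb (l-m))
      = cb (Suc m) * cb (l - Suc m) * (2*real m + 2) * (2*real l - 2*real m - 1)"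
  proof -
    have "(2*real m+1) * (2*real l - 2*real m) * (cb m * cb (l-m))
        = 2 * (2*real m+1) * cb m * (cb (l - m) * (real l - real m))" by (simp add: algebra_simps)
    also have "\<dots> = 2 * (2*real m+1) * cb m * (2 * (2 * (real l - real m - 1) + 1) * cb (l - Suc m))"
      by (simp only: rb)
    also have "\<dots> = (2 * (2 * real m + 1) * cb m) * 2 * (2*real l - 2*real m - 1) * cb (l - Suc m)"
      by (simp add: algebra_simps)
    also have "\<dots> = (cb (Suc m) * (real m + 1)) * 2 * (2*real l - 2*real m - 1) * cb (l - Suc m)"
      by (simp only: ra)
    also have "\<dots> = cb (Suc m) * cb (l - Suc m) * (2*real m + 2) * (2*real l - 2*real m - 1)"
      by (simp add: algebra_simps)
    finally show ?thesis .
  qed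
  have e2: "2 * Suc m = Suc (Suc (2*m))" by simp
  have g: "gam l (2 * Suc m) = - ((2*real m+1) * (2*real l - 2*real m)) * gam l (2*m)"
    unfolding e2 by simp
  have n: "Nr (2 * Suc m) = (2*real m + 2) * (2*real l - 2*real m - 1) * ((2*real m+1) * (2*real l - 2*real m)) * Nr (2*m)"
    unfolding e2 Nr_rec by (simp add: algebra_simps)
  have g2: "(gam l (2 * Suc m))^2 = ((2*real m+1) * (2*real l - 2*real m))^2 * (gam l (2*m))^2"
    unfolding g by (simp only: power_mult_distrib power2_minus)
  have "(gam l (2 * Suc m))^2 * cb l * Nr 0
      = ((2*real m+1) * (2*real l - 2*real m))^2 * ((gam l (2*m))^2 * cb l * Nr 0)"
    by (simp only: g2 mult.assoc)
  also have "\<dots> = ((2*real m+1) * (2*real l - 2*real m))^2 * (cb m * cb (l - m) * Nr (2*m))"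
    using Suc.IH ml by simp
  also have "\<dots> = ((2*real m+1) * (2*real l - 2*real m)) * ((2*real m+1) * (2*real l - 2*real m) * (cb m * cb (l-m))) * Nr (2*m)"
    by (simp add: power2_eq_square algebra_simps)
  also have "\<dots> = ((2*real m+1) * (2*real l - 2*real m)) * (cb (Suc m) * cb (l - Suc m) * (2*real m + 2) * (2*real l - 2*real m - 1)) * Nr (2*m)"
    by (simp only: u)
  also have "\<dots> = cb (Suc m) * cb (l - Suc m) * Nr (2 * Suc m)"
    unfolding n by (simp add: algebra_simps)
  finally show ?case .
qed

lemma term_even: "q \<le> l \<Longrightarrow> (gam l (2*q))^2 / Nr (2*q) = cb q * cb (l - q) / (cb l * Nr 0)"
proof -
  assume q: "q \<le> l"
  have p1: "Nr (2*q) > 0" using q by (intro Nr_pos) simp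
  have p2: "cb l * Nr 0 > 0" using Nr_pos[of 0] cb_pos[of l] by simp
  have "(gam l (2*q))^2 * (cb l * Nr 0) = cb q * cb (l - q) * Nr (2*q)"
    using key[OF q] by (simp only: mult.assoc)
  then show ?thesis
    by (subst frac_eq_eq) (use p1 p2 in auto)
qed

lemma split_sum: "(\<Sum>k\<le>2*l. (f::nat\<Rightarrow>real) k) = (\<Sum>q=0..l. f (2*q)) + (\<Sum>q<l. f (2*q+1))"
  using sum_even_odd[of f l] by (simp add: atLeast0AtMost)

lemma SX: "(\<Sum>k\<le>2*l. (gam l k)^2 / Nr k) = 4^l / (cb l * Nr 0)"
proof -
  have "(\<Sum>k\<le>2*l. (gam l k)^2 / Nr k) = (\<Sum>q=0..l. cb q * cb (l - q) / (cb l * Nr 0))"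
    by (simp add: split_sum gam_odd term_even)
  also have "\<dots> = (\<Sum>q=0..l. cb q * cb (l - q)) / (cb l * Nr 0)"
    by (simp add: sum_divide_distrib)
  finally show ?thesis by (simp add: I1)
qed

lemma SY: "(\<Sum>k\<le>2*l. (dlt l k)^2 / Nr k) = 4^l / (cb l * Nr 0)"
  using SX by (simp add: dlt_sq)

lemma SXY: "(\<Sum>k\<le>2*l. gam l k * dlt l k / Nr k) = (if even l then 4^(l div 2) * cb (l div 2) else 0) / (cb l * Nr 0)"
proof -
  have "(\<Sum>k\<le>2*l. gam l k * dlt l k / Nr k) = (\<Sum>q=0..l. (-1)^q * ((gam l (2*q))^2 / Nr (2*q)))"
    by (simp add: split_sum gam_dlt)
  also have "\<dots> = (\<Sum>q=0..l. (-1)^q * (cb q * cb (l - q) / (cb l * Nr 0)))"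
    by (rule sum.cong) (simp_all only: term_even atLeastAtMost_iff)
  also have "\<dots> = (\<Sum>q=0..l. (-1)^q * cb q * cb (l - q)) / (cb l * Nr 0)"
    by (simp add: sum_divide_distrib mult.assoc)
  finally show ?thesis by (simp add: I2)
qed

lemma final:
  assumes wA: "w1 \<noteq> 0" "A *v w1 = 0" and wB: "w2 \<noteq> 0" "B *v w2 = 0"
  shows "\<exists>x y z. A *v x = 0 \<and> B *v y = 0 \<and> C *v z = 0 \<and>
            norm x = 1 \<and> norm y = 1 \<and> norm z = 1 \<and>
            (let c = (if even l
                      then complex_of_real ((-1) ^ (l div 2) / 2 ^ l * real (l choose (l div 2)))
                      else 0)
             in braket x y = c \<and> braket y z = c \<and> braket z x = c)"
proof -
  obtain xh where xh0: "A *v xh = 0" and xh: "\<And>k. braket (e k) xh = complex_of_real (gam l k)"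
    using xhat[OF wA] by blast
  obtain yh where yh0: "B *v yh = 0" and yh: "\<And>k. braket (e k) yh = complex_of_real (dlt l k)"
    using yhat[OF wB] by blast
  define D where "D = cb l * Nr 0"
  have Dpos: "D > 0" unfolding D_def using Nr_pos[of 0] cb_pos[of l] by simp
  define X where "X = 4^l / D"
  have Xpos: "X > 0" unfolding X_def using Dpos by simp
  define S where "S = (if even l then 4^(l div 2) * cb (l div 2) else 0) / D"
  have bxx: "braket xh xh = complex_of_real X"
  proof -
    have "braket xh xh = complex_of_real (\<Sum>k\<le>2*l. (gam l k)^2 / Nr k)"
      unfolding parseval[of xh xh] of_real_sum
      by (rule sum.cong) (simp_all add: xh Nr_braket power2_eq_square)
    then show ?thesis by (simp add: SX X_def D_def)
  qed
  have byy: "braket yh yh = complex_of_real X"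
  proof -
    have "braket yh yh = complex_of_real (\<Sum>k\<le>2*l. (dlt l k)^2 / Nr k)"
      unfolding parseval[of yh yh] of_real_sum
      by (rule sum.cong) (simp_all add: yh Nr_braket power2_eq_square)
    then show ?thesis by (simp add: SY X_def D_def)
  qed
  have bxy: "braket xh yh = complex_of_real S"
  proof -
    have "braket xh yh = complex_of_real (\<Sum>k\<le>2*l. gam l k * dlt l k / Nr k)"
      unfolding parseval[of xh yh] of_real_sum
      by (rule sum.cong) (simp_all add: xh yh Nr_braket)
    then show ?thesis by (simp add: SXY S_def D_def)
  qed
  have bzx: "braket (e l) xh = complex_of_real (gam l l)" by (rule xh)
  have byz: "braket yh (e l) = complex_of_real (dlt l l)"
    using yh[of l] braket_cnj[of "e l" yh] by simp
  have bzz: "braket (e l) (e l) = complex_of_real (Nr l)" by (rule Nr_braket)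
  define r where "r = sqrt X"
  have rpos: "r > 0" and rr: "r * r = X" using Xpos by (simp_all add: r_def)
  define nl where "nl = sqrt (Nr l)"
  have nlpos: "nl > 0" and nn: "nl * nl = Nr l" using Nr_pos[of l] by (simp_all add: nl_def)
  define cR where "cR = (if even l then (-1) ^ (l div 2) / 2 ^ l * real (l choose (l div 2)) else 0::real)"
  have cc: "(if even l then complex_of_real ((-1) ^ (l div 2) / 2 ^ l * real (l choose (l div 2))) else 0)
      = complex_of_real cR" by (simp add: cR_def)
  define sg where "sg = (if even l then (-1)^(l div 2) else 1::real)"
  have sg2: "sg * sg = 1" by (simp add: sg_def power2_eq_square[symmetric])
  define w0 where "w0 = gam l l / (nl * r)"
  define t where "t = (if w0 = cR then 1 else -1::real)"
  have t2: "t * t = 1" by (simp add: t_def)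
  have sgd: "sg * dlt l l = gam l l"
  proof (cases "even l")
    case True
    then obtain p where p: "l = 2*p" by blast
    then show ?thesis using True by (simp add: sg_def dlt_even power2_eq_square[symmetric])
  next
    case False
    then obtain q where "l = 2*q+1" using oddE by blast
    then show ?thesis by simp
  qed
  have E1: "(1/r) * (sg/r) * S = cR"
  proof (cases "even l")
    case False
    then show ?thesis by (simp add: S_def cR_def)
  next
    case True
    then obtain p where p: "l = 2*p" by blast
    have lp: "l div 2 = p" using p by simp
    have c4: "(4::real)^l = 4^p * 4^p" using p by (simp add: power_add[symmetric] mult_2)
    have c2: "(2::real)^l = 4^p" using p by (simp add: power_mult)
    have cbp: "real (l choose p) = cb p" using p by (simp add: cb_def)
    have "(1/r) * (sg/r) * S = sg * S / X" using rr rpos Xpos by (simp add: field_simps)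
    also have "\<dots> = sg * (4^p * cb p) / 4^l" using True Dpos by (simp add: S_def X_def lp field_simps)
    also have "\<dots> = sg * cb p / 4^p" unfolding c4 by (simp add: field_simps)
    also have "\<dots> = cR" using True by (simp add: cR_def sg_def lp c2 cbp)
    finally show ?thesis .
  qed
  have E3: "t * w0 = cR"
  proof (cases "even l")
    case False
    then obtain q where "l = 2*q+1" using oddE by blast
    then show ?thesis using False by (simp add: w0_def cR_def)
  next
    case True
    then obtain p where p: "l = 2*p" by blast
    have lp: "l div 2 = p" using p by simp
    have c4: "(4::real)^l = 2^l * 2^l" by (simp add: power_mult_distrib[symmetric])
    have cbp: "real (l choose p) = cb p" using p by (simp add: cb_def)
    have g2: "(gam l l)^2 / Nr l = cb p * cb p / D"
      using term_even[of p] p by (simp add: D_def)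
    have "w0 * w0 = (gam l l)^2 / Nr l / X"
      unfolding w0_def using rr nn by (simp add: field_simps power2_eq_square)
    also have "\<dots> = cb p * cb p / 4^l" unfolding g2 X_def using Dpos by (simp add: field_simps)
    also have "\<dots> = cR * cR" using True unfolding c4 by (simp add: cR_def lp cbp field_simps)
    finally have "w0 * w0 = cR * cR" .
    then have "w0 = cR \<or> w0 = - cR" by (metis minus_mult_minus square_eq_iff)
    then show ?thesis by (auto simp: t_def)
  qed
  have E2: "(sg/r) * (t/nl) * dlt l l = cR"
  proof -
    have "(sg/r) * (t/nl) * dlt l l = t * ((sg * dlt l l) / (nl * r))" by (simp add: field_simps)
    also have "\<dots> = t * w0" unfolding sgd w0_def ..
    finally show ?thesis using E3 by simp
  qed
  have E3': "(t/nl) * (1/r) * gam l l = cR"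
    using E3 unfolding w0_def by (simp add: field_simps)
  define x where "x = complex_of_real (1/r) *s xh"
  define y where "y = complex_of_real (sg/r) *s yh"
  define z where "z = complex_of_real (t/nl) *s e l"
  have "A *v x = 0" unfolding x_def by (simp add: mv_scale xh0)
  moreover have "B *v y = 0" unfolding y_def by (simp add: mv_scale yh0)
  moreover have "C *v z = 0" unfolding z_def by (simp add: mv_scale el_ker)
  moreover have "norm x = 1"
  proof (rule norm_one)
    have "braket x x = complex_of_real ((1/r) * (1/r) * X)" unfolding x_def braket_ofreal bxx by simp
    also have "(1/r) * (1/r) * X = 1" using rr rpos Xpos by (simp add: field_simps)
    finally show "braket x x = 1" by simp
  qed
  moreover have "norm y = 1"
  proof (rule norm_one)
    have "braket y y = complex_of_real ((sg/r) * (sg/r) * X)" unfolding y_def braket_ofreal byy by simp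
    also have "(sg/r) * (sg/r) * X = 1" using rr rpos Xpos sg2 by (simp add: field_simps)
    finally show "braket y y = 1" by simp
  qed
  moreover have "norm z = 1"
  proof (rule norm_one)
    have "braket z z = complex_of_real ((t/nl) * (t/nl) * Nr l)" unfolding z_def braket_ofreal bzz by simp
    also have "(t/nl) * (t/nl) * Nr l = 1" using nn nlpos t2 Nr_pos[of l] by (simp add: field_simps)
    finally show "braket z z = 1" by simp
  qed
  moreover have "braket x y = complex_of_real cR"
    unfolding x_def y_def braket_ofreal bxy E1[symmetric] by simp
  moreover have "braket y z = complex_of_real cR"
    unfolding y_def z_def braket_ofreal byz E2[symmetric] by simp
  moreover have "braket z x = complex_of_real cR"
    unfolding z_def x_def braket_ofreal bzx E3'[symmetric] by simp
  ultimately show ?thesis unfolding cc Let_def by blast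
qed

end

context su2
begin

lemma ker_third: "\<exists>u. u \<noteq> 0 \<and> C *v u = 0 \<and> (\<forall>v. C *v v = 0 \<longrightarrow> (\<exists>c. v = c *s u))"
proof -
  obtain e where e: "\<forall>k. C *v e k = (of_nat l - of_nat k) *s e k" "\<forall>k. jm (e k) = e (Suc k)"
       "\<forall>k. jp (e (Suc k)) = (of_nat (Suc k) * (2 * of_nat l - of_nat k)) *s e k" "jp (e 0) = 0"
       "\<forall>k. e k \<noteq> 0 \<longleftrightarrow> k \<le> 2*l" "\<forall>a b. a \<noteq> b \<longrightarrow> braket (e a) (e b) = 0"
       "vec.span (e ` {..2*l}) = UNIV"
    using basis_exists by blast
  interpret b: su2b A B C l e
    by unfold_locales (use e in auto)
  show ?thesis using b.el_nz b.el_ker b.kerC by blast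
qed

lemma final_su2:
  assumes "w1 \<noteq> 0" "A *v w1 = 0" "w2 \<noteq> 0" "B *v w2 = 0"
  shows "\<exists>x y z. A *v x = 0 \<and> B *v y = 0 \<and> C *v z = 0 \<and>
            norm x = 1 \<and> norm y = 1 \<and> norm z = 1 \<and>
            (let c = (if even l
                      then complex_of_real ((-1) ^ (l div 2) / 2 ^ l * real (l choose (l div 2)))
                      else 0)
             in braket x y = c \<and> braket y z = c \<and> braket z x = c)"
proof -
  obtain e where e: "\<forall>k. C *v e k = (of_nat l - of_nat k) *s e k" "\<forall>k. jm (e k) = e (Suc k)"
       "\<forall>k. jp (e (Suc k)) = (of_nat (Suc k) * (2 * of_nat l - of_nat k)) *s e k" "jp (e 0) = 0"
       "\<forall>k. e k \<noteq> 0 \<longleftrightarrow> k \<le> 2*l" "\<forall>a b. a \<noteq> b \<longrightarrow> braket (e a) (e b) = 0"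
       "vec.span (e ` {..2*l}) = UNIV"
    using basis_exists by blast
  interpret b: su2b A B C l e
    by unfold_locales (use e in auto)
  show ?thesis by (rule b.final[OF assms])
qed

end

lemma mat_eq_vec: "(\<And>v. (M::complex^'n^'n) *v v = N *v v) \<Longrightarrow> M = N"
  by (metis matrix_eq)

lemma kp_rank:
  fixes H :: "complex^'n^'n"
  assumes u: "u \<noteq> 0" "H *v u = 0" and ker: "\<And>v. H *v v = 0 \<Longrightarrow> \<exists>c. v = c *s u"
  shows "rank (kernel_projector H) = 1"
proof -
  define u' where "u' = complex_of_real (1 / norm u) *s u"
  have uu: "braket u' u' = 1"
  proof -
    have "braket u' u' = complex_of_real ((1 / norm u) * (1 / norm u)) * braket u u"
      unfolding u'_def braket_ofreal ..
    also have "\<dots> = complex_of_real ((1 / norm u) * (1 / norm u) * (norm u)^2)"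
      unfolding braket_self by simp
    also have "(1 / norm u) * (1 / norm u) * (norm u)^2 = 1"
      using u by (simp add: power2_eq_square)
    finally show ?thesis by simp
  qed
  have Hu': "H *v u' = 0" using u by (simp add: u'_def mv_scale)
  have ker': "\<exists>c. v = c *s u'" if Hv: "H *v v = 0" for v
  proof -
    obtain c where "v = c *s u" using ker[OF Hv] by blast
    then have "v = (c * complex_of_real (norm u)) *s u'"
      using u by (simp add: u'_def Finite_Cartesian_Product.vec_eq_iff)
    then show ?thesis by blast
  qed
  define P0 :: "complex^'n^'n" where "P0 = (\<chi> i j. u' $ i * cnj (u' $ j))"
  have P0v: "P0 *v v = braket u' v *s u'" for v
    by (simp add: P0_def matrix_vector_mult_def braket_def Finite_Cartesian_Product.vec_eq_iff
        sum_distrib_left sum_distrib_right mult_ac)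
  have Q0: "hermitian P0 \<and> P0 ** P0 = P0 \<and> range (\<lambda>v. P0 *v v) = {v. H *v v = 0}"
  proof (intro conjI)
    show "hermitian P0" by (simp add: hermitian_def adjoint_mat_def P0_def mult.commute)
    show "P0 ** P0 = P0"
      by (rule mat_eq_vec) (simp add: matrix_vector_mul_assoc[symmetric] P0v braket_scale_right uu)
    show "range (\<lambda>v. P0 *v v) = {v. H *v v = 0}"
    proof
      show "range (\<lambda>v. P0 *v v) \<subseteq> {v. H *v v = 0}" by (auto simp: P0v mv_scale Hu')
      show "{v. H *v v = 0} \<subseteq> range (\<lambda>v. P0 *v v)"
      proof
        fix v assume "v \<in> {v. H *v v = 0}"
        then obtain c where c: "v = c *s u'" using ker' by blast
        then have "P0 *v v = v" by (simp add: P0v braket_scale_right uu)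
        then show "v \<in> range (\<lambda>v. P0 *v v)" by (metis rangeI)
      qed
    qed
  qed
  have uniq: "P = P0" if Q: "hermitian P \<and> P ** P = P \<and> range (\<lambda>v. P *v v) = {v. H *v v = 0}" for P
  proof (rule mat_eq_vec)
    fix v
    from Q have hP: "hermitian P" and PP: "P ** P = P" and R: "range (\<lambda>v. P *v v) = {v. H *v v = 0}" by auto
    have fix_: "P *v w = w" if "H *v w = 0" for w
    proof -
      have "w \<in> range (\<lambda>v. P *v v)" using R that by simp
      then obtain z where "w = P *v z" by auto
      then show ?thesis using PP by (simp add: matrix_vector_mul_assoc)
    qed
    have "H *v (P *v v) = 0" using R by auto
    then obtain a where a: "P *v v = a *s u'" using ker' by blast
    have "braket u' (P *v v) = braket (P *v u') v" by (rule braket_herm[OF hP])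
    also have "\<dots> = braket u' v" using fix_[OF Hu'] by simp
    finally have "a = braket u' v" using a by (simp add: braket_scale_right uu)
    then show "P *v v = P0 *v v" using a by (simp add: P0v)
  qed
  have kpP: "kernel_projector H = P0"
    unfolding kernel_projector_def
    by (rule the_equality[where P="\<lambda>P. hermitian P \<and> P ** P = P \<and> range (\<lambda>v. P *v v) = {v. H *v v = 0}"])
       (rule Q0, erule uniq)
  have "u' \<noteq> 0" using uu by auto
  then obtain i where ui: "u' $ i \<noteq> 0" by (auto simp: Finite_Cartesian_Product.vec_eq_iff)
  define cu :: "complex^'n" where "cu = (\<chi> j. cnj (u' $ j))"
  have rowk: "Finite_Cartesian_Product.row k P0 = u' $ k *s cu" for k
    by (simp add: Finite_Cartesian_Product.row_def P0_def cu_def Finite_Cartesian_Product.vec_eq_iff)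
  have cunz: "cu \<noteq> 0"
  proof
    assume "cu = 0"
    moreover have "cu $ i = cnj (u' $ i)" by (simp add: cu_def)
    ultimately have "cnj (u' $ i) = 0" by simp
    with ui show False by simp
  qed
  have rows_eq: "Finite_Cartesian_Product.rows P0 = (\<lambda>k::'n. u' $ k *s cu) ` UNIV"
    unfolding Finite_Cartesian_Product.rows_def rowk by auto
  have s1: "vec.span (Finite_Cartesian_Product.rows P0) \<subseteq> vec.span {cu}"
    by (rule vec.span_minimal) (auto simp: rows_eq intro: vec.span_scale vec.span_base)
  have "cu = (1 / u' $ i) *s (u' $ i *s cu)" using ui by (simp add: Finite_Cartesian_Product.vec_eq_iff)
  moreover have "u' $ i *s cu \<in> vec.span (Finite_Cartesian_Product.rows P0)"
    by (rule vec.span_base) (unfold rows_eq, rule rangeI)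
  ultimately have "cu \<in> vec.span (Finite_Cartesian_Product.rows P0)"
    by (metis vec.span_scale)
  then have s2: "vec.span {cu} \<subseteq> vec.span (Finite_Cartesian_Product.rows P0)"
    by (intro vec.span_minimal) auto
  have "vec.dim (Finite_Cartesian_Product.rows P0) = vec.dim {cu}"
    by (rule vec.span_eq_dim) (use s1 s2 in blast)
  then show ?thesis using cunz by (simp add: kpP row_rank_def_gen)
qed


theorem lemma4p1:
  fixes Jx Jy Jz :: "complex^'n^'n" and l :: nat
  assumes "l \<ge> 1"
    and "CARD('n) = 2 * l + 1"
    and "su2_rep Jx Jy Jz"
    and "su2_irreducible Jx Jy Jz"
  shows "rank (kernel_projector Jx) = 1 \<and> rank (kernel_projector Jy) = 1 \<and>
         rank (kernel_projector Jz) = 1 \<and>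
         (\<exists>x y z. Jx *v x = 0 \<and> Jy *v y = 0 \<and> Jz *v z = 0 \<and>
            norm x = 1 \<and> norm y = 1 \<and> norm z = 1 \<and>
            (let c = (if even l
                      then complex_of_real ((-1) ^ (l div 2) / 2 ^ l * real (l choose (l div 2)))
                      else 0)
             in braket x y = c \<and> braket y z = c \<and> braket z x = c))"
proof -
  have r1: "su2 Jx Jy Jz l" unfolding su2_def using assms by blast
  have r2: "su2 Jy Jz Jx l" unfolding su2_def using assms(2-4)
    by (auto simp: su2_rep_def su2_irreducible_def)
  have r3: "su2 Jz Jx Jy l" unfolding su2_def using assms(2-4)
    by (auto simp: su2_rep_def su2_irreducible_def)
  obtain uz where uz: "uz \<noteq> 0" "Jz *v uz = 0" "\<forall>v. Jz *v v = 0 \<longrightarrow> (\<exists>c. v = c *s uz)"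
    using su2.ker_third[OF r1] by blast
  obtain ux where ux: "ux \<noteq> 0" "Jx *v ux = 0" "\<forall>v. Jx *v v = 0 \<longrightarrow> (\<exists>c. v = c *s ux)"
    using su2.ker_third[OF r2] by blast
  obtain uy where uy: "uy \<noteq> 0" "Jy *v uy = 0" "\<forall>v. Jy *v v = 0 \<longrightarrow> (\<exists>c. v = c *s uy)"
    using su2.ker_third[OF r3] by blast
  have kx: "rank (kernel_projector Jx) = 1" using ux by (intro kp_rank[of ux]) auto
  have ky: "rank (kernel_projector Jy) = 1" using uy by (intro kp_rank[of uy]) auto
  have kz: "rank (kernel_projector Jz) = 1" using uz by (intro kp_rank[of uz]) auto
  show ?thesis using kx ky kz su2.final_su2[OF r1 ux(1,2) uy(1,2)] by blast
qed


end
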